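(* Let $A$ be a two-dimensional evolution algebra over a field $\mathbb{K}$ with $A^2=A$. Then $A$ satisfies a nontrivial $3$-linear identity $w(x,y,z)=\lambda_1(xy)z+\lambda_2(yz)x+\lambda_3(zx)y$ (with $(\lambda_1,\lambda_2,\lambda_3)\neq(0,0,0)$) if and only if $A$ is isomorphic to $A_1$; and the $3$-linear identities satisfied by $A_1$ are exactly those with $\lambda_1+\lambda_2+\lambda_3=0$, i.e. those following from the associative identity $(xy)z=x(yz)$.
   Context: An evolution algebra over $\mathbb{K}$ is a $\mathbb{K}$-algebra with a basis $\{e_i\}$ (natural basis) such that $e_ie_j=0$ for $i\neq j$; evolution algebras are commutative. In the free nonassociative commutative algebra on generators $X$, a $3$-linear element in distinct generators $x,y,z$ has the form $w(x,y,z)=\lambda_1(xy)z+\lambda_2(yz)x+\lambda_3(zx)y$, $\lambda_i\in\mathbb{K}$; $A$ satisfies $w$ if $w(a,b,c)=0$ for all $a,b,c\in A$. $A_1$ is the evolution algebra with natural basis $\{e_1,e_2\}$, $e_1^2=e_1$, $e_2^2=e_2$. *)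

theory Defs
  imports Main
begin

text \<open>A two-dimensional algebra over a field 'k is modelled on the coordinate
space 'k x 'k (every 2-dimensional 'k-vector space is isomorphic to it) together
with a bilinear multiplication.\<close>

type_synonym 'k pt = "'k \<times> 'k"

definition padd :: "'k::field pt \<Rightarrow> 'k pt \<Rightarrow> 'k pt" where
  "padd u v = (fst u + fst v, snd u + snd v)"

definition psmul :: "'k::field \<Rightarrow> 'k pt \<Rightarrow> 'k pt" where
  "psmul c u = (c * fst u, c * snd u)"

definition pzero :: "'k::field pt" where
  "pzero = (0, 0)"

definition bilinear_mult :: "('k::field pt \<Rightarrow> 'k pt \<Rightarrow> 'k pt) \<Rightarrow> bool" where
  "bilinear_mult m \<longleftrightarrow>
     (\<forall>x y z. m (padd x y) z = padd (m x z) (m y z)) \<and>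
     (\<forall>x y z. m x (padd y z) = padd (m x y) (m x z)) \<and>
     (\<forall>c x y. m (psmul c x) y = psmul c (m x y)) \<and>
     (\<forall>c x y. m x (psmul c y) = psmul c (m x y))"

definition lin_indep2 :: "'k::field pt \<Rightarrow> 'k pt \<Rightarrow> bool" where
  "lin_indep2 e1 e2 \<longleftrightarrow>
     (\<forall>a b. padd (psmul a e1) (psmul b e2) = pzero \<longrightarrow> a = 0 \<and> b = 0)"

definition evolution_algebra2 :: "('k::field pt \<Rightarrow> 'k pt \<Rightarrow> 'k pt) \<Rightarrow> bool" where
  "evolution_algebra2 m \<longleftrightarrow> bilinear_mult m \<and>
     (\<exists>e1 e2. lin_indep2 e1 e2 \<and> m e1 e2 = pzero \<and> m e2 e1 = pzero)"

inductive_set square_span :: "('k::field pt \<Rightarrow> 'k pt \<Rightarrow> 'k pt) \<Rightarrow> 'k pt set"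
  for m where
    prod: "m x y \<in> square_span m"
  | zero: "pzero \<in> square_span m"
  | add: "u \<in> square_span m \<Longrightarrow> v \<in> square_span m \<Longrightarrow> padd u v \<in> square_span m"
  | smul: "u \<in> square_span m \<Longrightarrow> psmul c u \<in> square_span m"

text \<open>The algebra A_1: natural basis e1=(1,0), e2=(0,1), e1^2=e1, e2^2=e2.\<close>
definition A1_mult :: "'k::field pt \<Rightarrow> 'k pt \<Rightarrow> 'k pt" where
  "A1_mult x y = (fst x * fst y, snd x * snd y)"

definition alg_isomorphic ::
  "('k::field pt \<Rightarrow> 'k pt \<Rightarrow> 'k pt) \<Rightarrow> ('k pt \<Rightarrow> 'k pt \<Rightarrow> 'k pt) \<Rightarrow> bool" where
  "alg_isomorphic m m' \<longleftrightarrow> (\<exists>f. bij f \<and>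
     (\<forall>x y. f (padd x y) = padd (f x) (f y)) \<and>
     (\<forall>c x. f (psmul c x) = psmul c (f x)) \<and>
     (\<forall>x y. f (m x y) = m' (f x) (f y)))"

definition w3 :: "('k::field pt \<Rightarrow> 'k pt \<Rightarrow> 'k pt) \<Rightarrow> 'k \<Rightarrow> 'k \<Rightarrow> 'k \<Rightarrow>
                    'k pt \<Rightarrow> 'k pt \<Rightarrow> 'k pt \<Rightarrow> 'k pt" where
  "w3 m l1 l2 l3 a b c =
     padd (padd (psmul l1 (m (m a b) c)) (psmul l2 (m (m b c) a))) (psmul l3 (m (m c a) b))"

definition satisfies_w3 :: "('k::field pt \<Rightarrow> 'k pt \<Rightarrow> 'k pt) \<Rightarrow> 'k \<Rightarrow> 'k \<Rightarrow> 'k \<Rightarrow> bool" where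
  "satisfies_w3 m l1 l2 l3 \<longleftrightarrow> (\<forall>a b c. w3 m l1 l2 l3 a b c = pzero)"

end

theory Submission
  imports Defs
begin

definition Dt :: "'k::field pt \<Rightarrow> 'k pt \<Rightarrow> 'k" where
  "Dt e1 e2 = fst e1 * snd e2 - snd e1 * fst e2"
definition cal :: "'k::field pt \<Rightarrow> 'k pt \<Rightarrow> 'k pt \<Rightarrow> 'k" where
  "cal e1 e2 x = (snd e2 * fst x - fst e2 * snd x) / Dt e1 e2"
definition cbe :: "'k::field pt \<Rightarrow> 'k pt \<Rightarrow> 'k pt \<Rightarrow> 'k" where
  "cbe e1 e2 x = (fst e1 * snd x - snd e1 * fst x) / Dt e1 e2"

lemma Dt_nz: assumes "lin_indep2 e1 e2" shows "Dt e1 e2 \<noteq> 0"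
proof
  assume D: "Dt e1 e2 = 0"
  obtain p q r s where e: "e1 = (p,q)" "e2 = (r,s)" by (cases e1, cases e2) auto
  have D': "p*s = q*r" using D e by (simp add: Dt_def)
  show False
  proof (cases "s \<noteq> 0 \<or> q \<noteq> 0")
    case True
    have "padd (psmul s e1) (psmul (-q) e2) = pzero"
      using D' e by (simp add: padd_def psmul_def pzero_def algebra_simps)
    then show False using assms True unfolding lin_indep2_def by force
  next
    case False
    show False
    proof (cases "r \<noteq> 0 \<or> p \<noteq> 0")
      case True
      have "padd (psmul r e1) (psmul (-p) e2) = pzero"
        using D' e False by (simp add: padd_def psmul_def pzero_def algebra_simps)
      then show False using assms True unfolding lin_indep2_def by force
    next
      case F2: False
      have "padd (psmul 1 e1) (psmul 0 e2) = pzero"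
        using e False F2 by (simp add: padd_def psmul_def pzero_def)
      then show False using assms unfolding lin_indep2_def by force
    qed
  qed
qed

locale ev2 =
  fixes m :: "'k::field pt \<Rightarrow> 'k pt \<Rightarrow> 'k pt" and e1 e2 :: "'k pt"
  assumes bil: "bilinear_mult m" and li: "lin_indep2 e1 e2"
    and z12: "m e1 e2 = pzero" and z21: "m e2 e1 = pzero"
begin

abbreviation "al \<equiv> cal e1 e2"
abbreviation "be \<equiv> cbe e1 e2"
abbreviation "E1 \<equiv> m e1 e1"
abbreviation "E2 \<equiv> m e2 e2"

lemma DNZ: "Dt e1 e2 \<noteq> 0" using Dt_nz[OF li] .

lemma decomp: "padd (psmul (al x) e1) (psmul (be x) e2) = x"
proof -
  obtain p q r t x1 x2 where e: "e1 = (p,q)" "e2 = (r,t)" "x = (x1,x2)"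
    by (cases e1, cases e2, cases x) auto
  have D: "p*t - q*r \<noteq> 0" using DNZ e by (simp add: Dt_def)
  have n1: "(t*x1 - r*x2)*p + (p*x2 - q*x1)*r = x1*(p*t-q*r)" by (simp add: algebra_simps)
  have n2: "(t*x1 - r*x2)*q + (p*x2 - q*x1)*t = x2*(p*t-q*r)" by (simp add: algebra_simps)
  have 1: "(t*x1 - r*x2)/(p*t-q*r) * p + (p*x2 - q*x1)/(p*t-q*r) * r = x1"
  proof -
    have "(t*x1 - r*x2)/(p*t-q*r) * p + (p*x2 - q*x1)/(p*t-q*r) * r
        = ((t*x1 - r*x2)*p + (p*x2 - q*x1)*r)/(p*t-q*r)" by (simp add: add_divide_distrib)
    also have "... = x1" using n1 D by simp
    finally show ?thesis .
  qed
  have 2: "(t*x1 - r*x2)/(p*t-q*r) * q + (p*x2 - q*x1)/(p*t-q*r) * t = x2"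
  proof -
    have "(t*x1 - r*x2)/(p*t-q*r) * q + (p*x2 - q*x1)/(p*t-q*r) * t
        = ((t*x1 - r*x2)*q + (p*x2 - q*x1)*t)/(p*t-q*r)" by (simp add: add_divide_distrib)
    also have "... = x2" using n2 D by simp
    finally show ?thesis .
  qed
  show ?thesis using 1 2 e by (simp add: padd_def psmul_def cal_def cbe_def Dt_def mult.commute)
qed

lemma eq_iff: "x = y \<longleftrightarrow> al x = al y \<and> be x = be y"
  by (metis decomp)

lemma al_add[simp]: "al (padd x y) = al x + al y"
  by (simp add: cal_def padd_def add_divide_distrib[symmetric] algebra_simps)
lemma be_add[simp]: "be (padd x y) = be x + be y"
  by (simp add: cbe_def padd_def add_divide_distrib[symmetric] algebra_simps)
lemma al_smul[simp]: "al (psmul c x) = c * al x"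
  by (simp add: cal_def psmul_def algebra_simps)
lemma be_smul[simp]: "be (psmul c x) = c * be x"
  by (simp add: cbe_def psmul_def algebra_simps)
lemma al_zero[simp]: "al pzero = 0" by (simp add: cal_def pzero_def)
lemma be_zero[simp]: "be pzero = 0" by (simp add: cbe_def pzero_def)
lemma al_e1[simp]: "al e1 = 1" using DNZ by (simp add: cal_def Dt_def algebra_simps)
lemma al_e2[simp]: "al e2 = 0" by (simp add: cal_def Dt_def algebra_simps)
lemma be_e1[simp]: "be e1 = 0" by (simp add: cbe_def Dt_def algebra_simps)
lemma be_e2[simp]: "be e2 = 1" using DNZ by (simp add: cbe_def Dt_def algebra_simps)

lemma expand: "m (padd (psmul a e1) (psmul b e2)) (padd (psmul c e1) (psmul d e2))
   = padd (psmul (a*c) E1) (psmul (b*d) E2)"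
proof -
  have l1: "m (padd x y) z = padd (m x z) (m y z)"
   and l2: "m x (padd y z) = padd (m x y) (m x z)"
   and l3: "m (psmul c x) y = psmul c (m x y)"
   and l4: "m x (psmul c y) = psmul c (m x y)" for x y z c
    using bil unfolding bilinear_mult_def by blast+
  show ?thesis
    apply (simp only: l1 l2 l3 l4 z12 z21)
    by (simp add: padd_def psmul_def pzero_def algebra_simps)
qed

lemma mult_formula: "m x y = padd (psmul (al x * al y) E1) (psmul (be x * be y) E2)"
  by (metis decomp expand)

lemma al_m: "al (m x y) = al x * al y * al E1 + be x * be y * al E2"
  by (subst mult_formula) simp
lemma be_m: "be (m x y) = al x * al y * be E1 + be x * be y * be E2"
  by (subst mult_formula) simp

lemma span_lemma: "v \<in> square_span m \<Longrightarrow>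
   \<exists>u w. al v = u*al E1 + w*al E2 \<and> be v = u*be E1 + w*be E2"
proof (induction rule: square_span.induct)
  case (prod x y)
  show ?case by (rule exI[of _ "al x * al y"], rule exI[of _ "be x * be y"]) (simp add: al_m[of x y] be_m[of x y])
next
  case zero
  show ?case by (rule exI[of _ 0], rule exI[of _ 0]) simp
next
  case (add u v)
  then obtain a b c d where "al u = a*al E1 + b*al E2" "be u = a*be E1 + b*be E2"
    "al v = c*al E1 + d*al E2" "be v = c*be E1 + d*be E2" by blast
  then show ?case by (intro exI[of _ "a+c"] exI[of _ "b+d"]) (simp add: algebra_simps)
next
  case (smul u c)
  then obtain a b where "al u = a*al E1 + b*al E2" "be u = a*be E1 + b*be E2" by blast
  then show ?case by (intro exI[of _ "c*a"] exI[of _ "c*b"]) (simp add: algebra_simps)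
qed

lemma det_nz: assumes "square_span m = UNIV"
  shows "al E1 * be E2 - be E1 * al E2 \<noteq> 0"
proof
  assume d: "al E1 * be E2 - be E1 * al E2 = 0"
  obtain u w where 1: "al e1 = u*al E1 + w*al E2" "be e1 = u*be E1 + w*be E2"
    using span_lemma assms by blast
  obtain u' w' where 2: "al e2 = u'*al E1 + w'*al E2" "be e2 = u'*be E1 + w'*be E2"
    using span_lemma assms by blast
  have id: "(u*al E1 + w*al E2)*(u'*be E1 + w'*be E2) - (u*be E1 + w*be E2)*(u'*al E1 + w'*al E2)
     = (u*w' - w*u')*(al E1 * be E2 - be E1 * al E2)" by (simp add: algebra_simps)
  have "(1::'k)*1 - 0*0 = 0" using id 1 2 d by simp
  then show False by simp
qed

lemma forward:
  assumes sp: "square_span m = UNIV" and nt: "(l1, l2, l3) \<noteq> (0, 0, 0)"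
    and sat: "satisfies_w3 m l1 l2 l3"
  shows "alg_isomorphic m A1_mult"
proof -
  define A where "A = al E1"
  define B where "B = be E1"
  define C where "C = al E2"
  define Dd where "Dd = be E2"
  have det: "A*Dd - B*C \<noteq> 0" using det_nz[OF sp] by (simp add: A_def B_def C_def Dd_def)
  have w0: "al (w3 m l1 l2 l3 a b c) = 0 \<and> be (w3 m l1 l2 l3 a b c) = 0" for a b c
    using sat unfolding satisfies_w3_def by (metis al_zero be_zero)
  have c1: "l1*(B*C) = 0 \<and> l1*(B*Dd) = 0"
    using w0[of e1 e1 e2] by (simp add: w3_def z12 z21 al_m[of E1 e2] be_m[of E1 e2]
        al_m[of pzero e1] be_m[of pzero e1] A_def B_def C_def Dd_def)
  have c2: "l2*(B*C) = 0 \<and> l2*(B*Dd) = 0"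
    using w0[of e2 e1 e1] by (simp add: w3_def z12 z21 al_m[of E1 e2] be_m[of E1 e2]
        al_m[of pzero e1] be_m[of pzero e1] A_def B_def C_def Dd_def)
  have c3: "l3*(B*C) = 0 \<and> l3*(B*Dd) = 0"
    using w0[of e1 e2 e1] by (simp add: w3_def z12 z21 al_m[of E1 e2] be_m[of E1 e2]
        al_m[of pzero e1] be_m[of pzero e1] A_def B_def C_def Dd_def)
  have d1: "l1*(C*A) = 0 \<and> l1*(C*B) = 0"
    using w0[of e2 e2 e1] by (simp add: w3_def z12 z21 al_m[of E2 e1] be_m[of E2 e1]
        al_m[of pzero e2] be_m[of pzero e2] A_def B_def C_def Dd_def)
  have d2: "l2*(C*A) = 0 \<and> l2*(C*B) = 0"
    using w0[of e1 e2 e2] by (simp add: w3_def z12 z21 al_m[of E2 e1] be_m[of E2 e1]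
        al_m[of pzero e2] be_m[of pzero e2] A_def B_def C_def Dd_def)
  have d3: "l3*(C*A) = 0 \<and> l3*(C*B) = 0"
    using w0[of e2 e1 e2] by (simp add: w3_def z12 z21 al_m[of E2 e1] be_m[of E2 e1]
        al_m[of pzero e2] be_m[of pzero e2] A_def B_def C_def Dd_def)
  have CD: "C \<noteq> 0 \<or> Dd \<noteq> 0" using det by auto
  have AB: "A \<noteq> 0 \<or> B \<noteq> 0" using det by auto
  have l: "l1 \<noteq> 0 \<or> l2 \<noteq> 0 \<or> l3 \<noteq> 0" using nt by auto
  have B0: "B = 0" using c1 c2 c3 CD l by auto
  have C0: "C = 0" using d1 d2 d3 AB l by auto
  have A0: "A \<noteq> 0" and D0: "Dd \<noteq> 0" using det B0 C0 by auto
  define f where "f x = (A * al x, Dd * be x)" for x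
  have inj: "inj f"
  proof (rule injI)
    fix x y assume "f x = f y"
    then have "al x = al y \<and> be x = be y" using A0 D0 by (simp add: f_def)
    then show "x = y" using eq_iff by blast
  qed
  have surj: "surj f"
  proof -
    have "z = f (padd (psmul (fst z / A) e1) (psmul (snd z / Dd) e2))" for z
      using A0 D0 by (cases z) (simp add: f_def)
    then show ?thesis by blast
  qed
  show ?thesis unfolding alg_isomorphic_def
  proof (intro exI[of _ f] conjI allI)
    show "bij f" using inj surj by (simp add: bij_def)
    show "f (padd x y) = padd (f x) (f y)" for x y unfolding f_def al_add be_add by (simp add: padd_def distrib_left)
    show "f (psmul c x) = psmul c (f x)" for c x unfolding f_def al_smul be_smul by (simp add: psmul_def)
    show "f (m x y) = A1_mult (f x) (f y)" for x y
      using B0 C0 by (simp add: f_def A1_mult_def al_m[of x y] be_m[of x y]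
          A_def B_def C_def Dd_def algebra_simps)
  qed
qed

end

lemma A1_sat: "satisfies_w3 (A1_mult :: 'k::field pt \<Rightarrow> 'k pt \<Rightarrow> 'k pt) l1 l2 l3
   \<longleftrightarrow> l1 + l2 + l3 = 0"
proof
  assume "satisfies_w3 (A1_mult :: 'k::field pt \<Rightarrow> 'k pt \<Rightarrow> 'k pt) l1 l2 l3"
  then have "w3 (A1_mult :: 'k::field pt \<Rightarrow> 'k pt \<Rightarrow> 'k pt) l1 l2 l3 (1,1) (1,1) (1,1) = pzero"
    unfolding satisfies_w3_def by blast
  then show "l1 + l2 + l3 = 0"
    by (simp add: w3_def A1_mult_def padd_def psmul_def pzero_def)
next
  assume h: "l1 + l2 + l3 = 0"
  have "l3 = (l1+l2+l3) - l1 - l2" by simp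
  then have l3: "l3 = - l1 - l2" using h by simp
  show "satisfies_w3 (A1_mult :: 'k::field pt \<Rightarrow> 'k pt \<Rightarrow> 'k pt) l1 l2 l3"
    unfolding satisfies_w3_def
    by (simp add: l3 w3_def A1_mult_def padd_def psmul_def pzero_def algebra_simps)
qed

lemma iso_back:
  assumes "alg_isomorphic m (A1_mult :: 'k::field pt \<Rightarrow> 'k pt \<Rightarrow> 'k pt)"
  shows "satisfies_w3 m 1 (-1) 0"
proof -
  obtain f where b: "bij f" and fa: "\<And>x y. f (padd x y) = padd (f x) (f y)"
    and fs: "\<And>c x. f (psmul c x) = psmul c (f x)"
    and fm: "\<And>x y. f (m x y) = A1_mult (f x) (f y)"
    using assms unfolding alg_isomorphic_def by blast
  have f0: "f pzero = pzero"
  proof -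
    have "f pzero = f (psmul 0 pzero)" by (simp add: psmul_def pzero_def)
    also have "... = psmul 0 (f pzero)" by (rule fs)
    finally show ?thesis by (simp add: psmul_def pzero_def)
  qed
  have A: "satisfies_w3 (A1_mult :: 'k::field pt \<Rightarrow> 'k pt \<Rightarrow> 'k pt) 1 (-1) 0"
    by (subst A1_sat) simp
  show ?thesis unfolding satisfies_w3_def
  proof (intro allI)
    fix a b c
    have "f (w3 m 1 (-1) 0 a b c) = w3 A1_mult 1 (-1) 0 (f a) (f b) (f c)"
      by (simp only: w3_def fa fs fm)
    also have "... = pzero" using A unfolding satisfies_w3_def by blast
    finally have "f (w3 m 1 (-1) 0 a b c) = f pzero" using f0 by simp
    then show "w3 m 1 (-1) 0 a b c = pzero" using b by (simp add: bij_def inj_eq)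
  qed
qed

theorem proposition4p1:
  fixes m :: "'k::field pt \<Rightarrow> 'k pt \<Rightarrow> 'k pt"
  assumes "evolution_algebra2 m"
    and "square_span m = UNIV"
  shows "((\<exists>l1 l2 l3. (l1, l2, l3) \<noteq> (0, 0, 0) \<and> satisfies_w3 m l1 l2 l3)
            \<longleftrightarrow> alg_isomorphic m A1_mult)
       \<and> (\<forall>l1 l2 l3. satisfies_w3 (A1_mult :: 'k pt \<Rightarrow> 'k pt \<Rightarrow> 'k pt) l1 l2 l3
            \<longleftrightarrow> l1 + l2 + l3 = 0)"
proof -
  obtain e1 e2 where "bilinear_mult m" "lin_indep2 e1 e2" "m e1 e2 = pzero" "m e2 e1 = pzero"
    using assms(1) unfolding evolution_algebra2_def by blast
  then interpret ev2 m e1 e2 by unfold_locales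
  have "(\<exists>l1 l2 l3. (l1, l2, l3) \<noteq> (0, 0, 0) \<and> satisfies_w3 m l1 l2 l3)
            \<longleftrightarrow> alg_isomorphic m A1_mult"
  proof
    assume "\<exists>l1 l2 l3. (l1, l2, l3) \<noteq> (0, 0, 0) \<and> satisfies_w3 m l1 l2 l3"
    then obtain l1 l2 l3 where "(l1, l2, l3) \<noteq> (0, 0, 0)" "satisfies_w3 m l1 l2 l3" by blast
    then show "alg_isomorphic m A1_mult" using forward assms(2) by blast
  next
    assume "alg_isomorphic m A1_mult"
    then have "satisfies_w3 m 1 (-1) 0" by (rule iso_back)
    then show "\<exists>l1 l2 l3. (l1, l2, l3) \<noteq> (0, 0, 0) \<and> satisfies_w3 m l1 l2 l3" by force
  qed
  then show ?thesis using A1_sat by blast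
qed

end
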